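(* Let $Q$ be a QNP, let $P=T_D(Q)$ be its direct translation, and let $\pi$ be a policy for $Q$ (and thus also for $P$). Then $\pi$ is $Q$-terminating if and only if $\pi$ is $P$-terminating.
   Context: A qualitative numerical problem (QNP) is a tuple $Q=\langle F,V,I,O,G\rangle$ where $F$ is a finite set of propositional variables and $V$ a finite set of numerical variables taking non-negative real values. $F$-literals are $p,\neg p$; $V$-literals are $X=0$ and $X>0$. Each action $a\in O$ has a precondition $Pre(a)$ (set of literals), propositional effects $\mathit{Eff}(a)$ (set of $F$-literals) and numerical effects $N(a)$ (atoms $Inc(X)$, $Dec(X)$, at most one per variable); if $Dec(X)\in N(a)$ then $X>0\in Pre(a)$. A state $s$ assigns truth values to $F$ and reals $s[X]\ge0$ to $V$; initial states satisfy $I$ under a closed-world assumption; goal states satisfy $G$. For applicable $a$ (i.e. $s$ satisfies $Pre(a)$), $s'\in F(a,s)$ iff the propositional effects are applied (others unchanged), $s'[X]>s[X]$ if $Inc(X)\in N(a)$, $s'[X]<s[X]$ if $Dec(X)\in N(a)$, $s'[X]=s[X]$ otherwise. A trajectory is a sequence $s_0,a_0,s_1,\dots$ with $s_0$ initial, $a_i$ applicable, $s_{i+1}\in F(a_i,s_i)$, that for some $\epsilon>0$ satisfies: for all $X,i$, $s_{i+1}[X]\ne s_i[X]$ implies $|s_{i+1}[X]-s_i[X]|\ge\epsilon$ or $0=s_{i+1}[X]<s_i[X]<\epsilon$. The boolean state $\bar s$ is the truth valuation on atoms $p\in F$ and $X=0$. A policy is a partial map $\pi$ from states to actions with $\pi(s)=\pi(s')$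 when $\bar s=\bar s'$; a $\pi$-trajectory has $a_i=\pi(s_i)$. $\pi$ is $Q$-terminating iff all $\pi$-trajectories of $Q$ are finite. $T_D(Q)$ is the FOND problem over $F\cup\{p_{X=0}:X\in V\}$ obtained by reading $X=0$ as $p_{X=0}$, $X>0$ as $\neg p_{X=0}$ in $I$, $G$, preconditions, keeping propositional effects, replacing $Inc(X)$ by the deterministic effect $\neg p_{X=0}$ and $Dec(X)$ by the nondeterministic effect $\neg p_{X=0}\mid p_{X=0}$; its states are the boolean states and $\pi$ acts via $\bar s\mapsto\pi(s)$. A $\pi$-trajectory of $T_D(Q)$ is a sequence from its initial state with $\pi(\bar s_i)$ applicable and $\bar s_{i+1}$ a possible successor. $Dec(X)$/$Inc(X)$ actions of $T_D(Q)$ are those coming from actions of $Q$ with $Dec(X)$/$Inc(X)$ in $N(a)$. An infinite $\pi$-trajectory of $T_D(Q)$ is terminating if there is $X\in V$ such that $\pi(\bar s)$ is a $Dec(X)$ action for some state $\bar s$ occurring infinitely often and $\pi(\bar s')$ is not an $Inc(X)$ action for any state $\bar s'$ occurring infinitely often. $\pi$ is $P$-terminating iff all infinite $\pi$-trajectories of $P=T_D(Q)$ are terminating. *)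

theory Defs
  imports Complex_Main "HOL-Library.Infinite_Set"
begin

text \<open>Propositional variables F are the (finite) type 'f, numerical variables V are the
(finite) type 'v, actions have type 'a; the action set O is a set of actions.\<close>

datatype ('f, 'v) lit = Atom 'f | NegAtom 'f | Eq0 'v | Gt0 'v

datatype 'v neff = Inc 'v | Dec 'v

record ('f, 'v, 'a) qnp =
  qI   :: "('f, 'v) lit set"
  qO   :: "'a set"
  qG   :: "('f, 'v) lit set"
  qPre :: "'a \<Rightarrow> ('f, 'v) lit set"
  qEff :: "'a \<Rightarrow> ('f \<times> bool) set"   \<comment> \<open>(p,True) is p, (p,False) is \<not>p\<close>
  qN   :: "'a \<Rightarrow> 'v neff set"

definition wf_qnp :: "('f, 'v, 'a) qnp \<Rightarrow> bool" where
  "wf_qnp Q \<longleftrightarrow>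
     (\<forall>a \<in> qO Q. \<forall>X. \<not> (Inc X \<in> qN Q a \<and> Dec X \<in> qN Q a)) \<and>
     (\<forall>a \<in> qO Q. \<forall>X. Dec X \<in> qN Q a \<longrightarrow> Gt0 X \<in> qPre Q a)"

type_synonym ('f, 'v) qstate = "('f \<Rightarrow> bool) \<times> ('v \<Rightarrow> real)"

fun holds :: "('f, 'v) qstate \<Rightarrow> ('f, 'v) lit \<Rightarrow> bool" where
  "holds s (Atom p) = fst s p"
| "holds s (NegAtom p) = (\<not> fst s p)"
| "holds s (Eq0 X) = (snd s X = 0)"
| "holds s (Gt0 X) = (snd s X > 0)"

definition sat :: "('f, 'v) qstate \<Rightarrow> ('f, 'v) lit set \<Rightarrow> bool" where
  "sat s L \<longleftrightarrow> (\<forall>l \<in> L. holds s l)"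

definition valid_state :: "('f, 'v) qstate \<Rightarrow> bool" where
  "valid_state s \<longleftrightarrow> (\<forall>X. snd s X \<ge> 0)"

text \<open>Initial states: closed-world reading of I on the boolean atoms p and X=0.\<close>
definition q_init :: "('f, 'v, 'a) qnp \<Rightarrow> ('f, 'v) qstate \<Rightarrow> bool" where
  "q_init Q s \<longleftrightarrow> valid_state s \<and>
     (\<forall>p. fst s p \<longleftrightarrow> Atom p \<in> qI Q) \<and> (\<forall>X. snd s X = 0 \<longleftrightarrow> Eq0 X \<in> qI Q)"

definition q_applicable :: "('f, 'v, 'a) qnp \<Rightarrow> 'a \<Rightarrow> ('f, 'v) qstate \<Rightarrow> bool" where
  "q_applicable Q a s \<longleftrightarrow> a \<in> qO Q \<and> sat s (qPre Q a)"

definition apply_peff :: "('f \<times> bool) set \<Rightarrow> ('f \<Rightarrow> bool) \<Rightarrow> 'f \<Rightarrow> bool" where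
  "apply_peff E v p = (if (p, True) \<in> E then True else if (p, False) \<in> E then False else v p)"

definition q_succ :: "('f, 'v, 'a) qnp \<Rightarrow> 'a \<Rightarrow> ('f, 'v) qstate \<Rightarrow> ('f, 'v) qstate \<Rightarrow> bool" where
  "q_succ Q a s s' \<longleftrightarrow> valid_state s' \<and>
     fst s' = apply_peff (qEff Q a) (fst s) \<and>
     (\<forall>X. (Inc X \<in> qN Q a \<longrightarrow> snd s' X > snd s X) \<and>
          (Dec X \<in> qN Q a \<longrightarrow> snd s' X < snd s X) \<and>
          (Inc X \<notin> qN Q a \<and> Dec X \<notin> qN Q a \<longrightarrow> snd s' X = snd s X))"

text \<open>Atoms of T_D(Q): Inl p for p \<in> F, Inr X for p_{X=0}.\<close>
type_synonym ('f, 'v) bstate = "'f + 'v \<Rightarrow> bool"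

definition bar :: "('f, 'v) qstate \<Rightarrow> ('f, 'v) bstate" where
  "bar s = (\<lambda>x. case x of Inl p \<Rightarrow> fst s p | Inr X \<Rightarrow> snd s X = 0)"

text \<open>A policy is a partial map on boolean states; on Q it acts as s \<mapsto> \<pi>(bar s), which
is exactly a partial map on states with \<pi>(s)=\<pi>(s') whenever bar s = bar s'.\<close>
type_synonym ('f, 'v, 'a) policy = "('f, 'v) bstate \<Rightarrow> 'a option"

definition q_inf_traj ::
  "('f, 'v, 'a) qnp \<Rightarrow> ('f, 'v, 'a) policy \<Rightarrow> (nat \<Rightarrow> ('f, 'v) qstate) \<Rightarrow> (nat \<Rightarrow> 'a) \<Rightarrow> bool" where
  "q_inf_traj Q \<pi> s a \<longleftrightarrow>
     q_init Q (s 0) \<and>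
     (\<forall>i. \<pi> (bar (s i)) = Some (a i) \<and> q_applicable Q (a i) (s i) \<and>
          q_succ Q (a i) (s i) (s (Suc i))) \<and>
     (\<exists>\<epsilon>::real. \<epsilon> > 0 \<and> (\<forall>X i. snd (s (Suc i)) X \<noteq> snd (s i) X \<longrightarrow>
         \<bar>snd (s (Suc i)) X - snd (s i) X\<bar> \<ge> \<epsilon> \<or>
         (0 = snd (s (Suc i)) X \<and> snd (s (Suc i)) X < snd (s i) X \<and> snd (s i) X < \<epsilon>)))"

definition Q_terminating :: "('f, 'v, 'a) qnp \<Rightarrow> ('f, 'v, 'a) policy \<Rightarrow> bool" where
  "Q_terminating Q \<pi> \<longleftrightarrow> \<not> (\<exists>s a. q_inf_traj Q \<pi> s a)"

text \<open>A FOND action effect assigns to each atom either None (unchanged) or the set of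
possible new truth values ({v}: deterministic; {True,False}: nondeterministic oneof).\<close>
record ('b, 'a) fond =
  fI   :: "('b \<times> bool) set"
  fO   :: "'a set"
  fG   :: "('b \<times> bool) set"
  fPre :: "'a \<Rightarrow> ('b \<times> bool) set"
  fEff :: "'a \<Rightarrow> 'b \<Rightarrow> bool set option"

definition fond_init :: "('b, 'a) fond \<Rightarrow> ('b \<Rightarrow> bool) \<Rightarrow> bool" where
  "fond_init P b \<longleftrightarrow> (\<forall>x. b x \<longleftrightarrow> (x, True) \<in> fI P)"

definition fond_applicable :: "('b, 'a) fond \<Rightarrow> 'a \<Rightarrow> ('b \<Rightarrow> bool) \<Rightarrow> bool" where
  "fond_applicable P a b \<longleftrightarrow> a \<in> fO P \<and> (\<forall>(x, v) \<in> fPre P a. b x = v)"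

definition fond_succ :: "('b, 'a) fond \<Rightarrow> 'a \<Rightarrow> ('b \<Rightarrow> bool) \<Rightarrow> ('b \<Rightarrow> bool) \<Rightarrow> bool" where
  "fond_succ P a b b' \<longleftrightarrow>
     (\<forall>x. case fEff P a x of None \<Rightarrow> b' x = b x | Some S \<Rightarrow> b' x \<in> S)"

fun tr_lit :: "('f, 'v) lit \<Rightarrow> ('f + 'v) \<times> bool" where
  "tr_lit (Atom p) = (Inl p, True)"
| "tr_lit (NegAtom p) = (Inl p, False)"
| "tr_lit (Eq0 X) = (Inr X, True)"
| "tr_lit (Gt0 X) = (Inr X, False)"

definition T_D :: "('f, 'v, 'a) qnp \<Rightarrow> ('f + 'v, 'a) fond" where
  "T_D Q = \<lparr> fI = tr_lit ` qI Q, fO = qO Q, fG = tr_lit ` qG Q,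
             fPre = (\<lambda>a. tr_lit ` qPre Q a),
             fEff = (\<lambda>a x. case x of
                 Inl p \<Rightarrow> (if (p, True) \<in> qEff Q a then Some {True}
                           else if (p, False) \<in> qEff Q a then Some {False} else None)
               | Inr X \<Rightarrow> (if Inc X \<in> qN Q a then Some {False}
                           else if Dec X \<in> qN Q a then Some {True, False} else None)) \<rparr>"

definition fond_inf_traj ::
  "('b, 'a) fond \<Rightarrow> (('b \<Rightarrow> bool) \<Rightarrow> 'a option) \<Rightarrow> (nat \<Rightarrow> 'b \<Rightarrow> bool) \<Rightarrow> bool" where
  "fond_inf_traj P \<pi> b \<longleftrightarrow> fond_init P (b 0) \<and>
     (\<forall>i. \<exists>a. \<pi> (b i) = Some a \<and> fond_applicable P a (b i) \<and> fond_succ P a (b i) (b (Suc i)))"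

definition is_Dec_action :: "('f, 'v, 'a) qnp \<Rightarrow> 'v \<Rightarrow> 'a option \<Rightarrow> bool" where
  "is_Dec_action Q X ao \<longleftrightarrow> (\<exists>a. ao = Some a \<and> Dec X \<in> qN Q a)"

definition is_Inc_action :: "('f, 'v, 'a) qnp \<Rightarrow> 'v \<Rightarrow> 'a option \<Rightarrow> bool" where
  "is_Inc_action Q X ao \<longleftrightarrow> (\<exists>a. ao = Some a \<and> Inc X \<in> qN Q a)"

definition occurs_inf :: "(nat \<Rightarrow> 'b) \<Rightarrow> 'b \<Rightarrow> bool" where
  "occurs_inf b x \<longleftrightarrow> (\<exists>\<^sub>\<infinity> i. b i = x)"

definition terminating_traj ::
  "('f, 'v, 'a) qnp \<Rightarrow> ('f, 'v, 'a) policy \<Rightarrow> (nat \<Rightarrow> ('f, 'v) bstate) \<Rightarrow> bool" where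
  "terminating_traj Q \<pi> b \<longleftrightarrow> (\<exists>X.
     (\<exists>x. occurs_inf b x \<and> is_Dec_action Q X (\<pi> x)) \<and>
     \<not> (\<exists>x'. occurs_inf b x' \<and> is_Inc_action Q X (\<pi> x')))"

definition P_terminating :: "('f, 'v, 'a) qnp \<Rightarrow> ('f, 'v, 'a) policy \<Rightarrow> bool" where
  "P_terminating Q \<pi> \<longleftrightarrow> (\<forall>b. fond_inf_traj (T_D Q) \<pi> b \<longrightarrow> terminating_traj Q \<pi> b)"

end

theory Submission
  imports Defs
begin

lemma pig:
  fixes b :: "nat \<Rightarrow> 'b::finite"
  assumes "infinite {i. P (b i)}"
  shows "\<exists>x. P x \<and> occurs_inf b x"
proof -
  obtain y where y: "y \<in> b ` {i. P (b i)}" "infinite (b -` {y} \<inter> {i. P (b i)})"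
    using inf_img_fin_domE'[of b "{i. P (b i)}"] assms by auto
  have "infinite {i. b i = y}"
    using y(2) by (rule infinite_super[rotated]) auto
  then show ?thesis using y(1) unfolding occurs_inf_def INFM_iff_infinite by auto
qed

lemma tr_lit_True_Inl: "(Inl p, True) \<in> tr_lit ` A \<longleftrightarrow> Atom p \<in> A"
proof
  assume "(Inl p, True) \<in> tr_lit ` A"
  then obtain l where "l \<in> A" "tr_lit l = (Inl p, True)" by auto
  then show "Atom p \<in> A" by (cases l) auto
qed force

lemma tr_lit_True_Inr: "(Inr X, True) \<in> tr_lit ` A \<longleftrightarrow> Eq0 X \<in> A"
proof
  assume "(Inr X, True) \<in> tr_lit ` A"
  then obtain l where "l \<in> A" "tr_lit l = (Inr X, True)" by auto
  then show "Eq0 X \<in> A" by (cases l) auto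
qed force

lemma q_to_p:
  fixes Q :: "('f::finite, 'v::finite, 'a) qnp"
  assumes wf: "wf_qnp Q" and traj: "q_inf_traj Q \<pi> s a" and pt: "P_terminating Q \<pi>"
  shows False
proof -
  have init: "q_init Q (s 0)" and step: "\<And>i. \<pi> (bar (s i)) = Some (a i) \<and> q_applicable Q (a i) (s i) \<and>
          q_succ Q (a i) (s i) (s (Suc i))"
    using traj unfolding q_inf_traj_def by auto
  obtain \<epsilon> :: real where eps: "\<epsilon> > 0" "\<forall>X i. snd (s (Suc i)) X \<noteq> snd (s i) X \<longrightarrow>
         \<bar>snd (s (Suc i)) X - snd (s i) X\<bar> \<ge> \<epsilon> \<or>
         (0 = snd (s (Suc i)) X \<and> snd (s (Suc i)) X < snd (s i) X \<and> snd (s i) X < \<epsilon>)"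
    using traj unfolding q_inf_traj_def by auto
  have valid: "valid_state (s i)" for i
    using init step[of "i - 1"] by (cases i) (auto simp: q_init_def q_succ_def)
  have pol: "\<pi> (bar (s i)) = Some (a i)" and app: "q_applicable Q (a i) (s i)"
    and suc: "q_succ Q (a i) (s i) (s (Suc i))" for i using step by auto
  have inO: "a i \<in> qO Q" for i using app by (simp add: q_applicable_def)
  have hold: "l \<in> qPre Q (a i) \<Longrightarrow> holds (s i) l" for l i
    using app by (auto simp: q_applicable_def sat_def)
  have notboth: "\<not> (Inc X \<in> qN Q (a i) \<and> Dec X \<in> qN Q (a i))" for X i
    using wf inO unfolding wf_qnp_def by blast
  define b where "b i = bar (s i)" for i
  have "fond_inf_traj (T_D Q) \<pi> b"
    unfolding fond_inf_traj_def
  proof (intro conjI allI)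
    show "fond_init (T_D Q) (b 0)"
      unfolding fond_init_def
    proof
      fix x show "b 0 x = ((x, True) \<in> fI (T_D Q))"
        using init by (cases x) (auto simp: b_def bar_def T_D_def tr_lit_True_Inl tr_lit_True_Inr q_init_def)
    qed
  next
    fix i
    have "fond_applicable (T_D Q) (a i) (b i)"
      unfolding fond_applicable_def
    proof (intro conjI ballI)
      show "a i \<in> fO (T_D Q)" using inO by (simp add: T_D_def)
    next
      fix xv assume "xv \<in> fPre (T_D Q) (a i)"
      then obtain l where l: "l \<in> qPre Q (a i)" "xv = tr_lit l" by (auto simp: T_D_def)
      have "holds (s i) l" using hold l(1) .
      then show "case xv of (x, v) \<Rightarrow> b i x = v"
        using l(2) by (cases l) (auto simp: b_def bar_def)
    qed
    moreover have "fond_succ (T_D Q) (a i) (b i) (b (Suc i))"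
      unfolding fond_succ_def
    proof
      fix x
      show "case fEff (T_D Q) (a i) x of None \<Rightarrow> b (Suc i) x = b i x | Some S \<Rightarrow> b (Suc i) x \<in> S"
      proof (cases x)
        case (Inl p)
        then show ?thesis using suc[of i]
          by (auto simp: T_D_def b_def bar_def q_succ_def apply_peff_def)
      next
        case (Inr X)
        have "snd (s i) X \<ge> 0" using valid[of i] by (simp add: valid_state_def)
        then show ?thesis using suc[of i] Inr
          by (auto simp: T_D_def b_def bar_def q_succ_def)
      qed
    qed
    ultimately show "\<exists>a. \<pi> (b i) = Some a \<and> fond_applicable (T_D Q) a (b i) \<and> fond_succ (T_D Q) a (b i) (b (Suc i))"
      using pol by (auto simp: b_def)
  qed
  then have "terminating_traj Q \<pi> b" using pt unfolding P_terminating_def by blast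
  then obtain X x where x: "occurs_inf b x" "is_Dec_action Q X (\<pi> x)"
    and noinc: "\<not> (\<exists>x'. occurs_inf b x' \<and> is_Inc_action Q X (\<pi> x'))"
    unfolding terminating_traj_def by blast
  have pb: "\<pi> (b i) = Some (a i)" for i using pol by (simp add: b_def)
  have "finite {i. Inc X \<in> qN Q (a i)}"
  proof (rule ccontr)
    assume "infinite {i. Inc X \<in> qN Q (a i)}"
    then have "infinite {i. is_Inc_action Q X (\<pi> (b i))}"
      by (simp add: is_Inc_action_def pb)
    then show False using pig[of "\<lambda>y. is_Inc_action Q X (\<pi> y)" b] noinc by blast
  qed
  then obtain N where N: "\<And>i. i \<ge> N \<Longrightarrow> Inc X \<notin> qN Q (a i)"
    by (metis finite_nat_set_iff_bounded_le mem_Collect_eq not_less_eq_eq)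
  have infdec: "infinite {i. Dec X \<in> qN Q (a i)}"
  proof -
    have "infinite {i. b i = x}" using x(1) unfolding occurs_inf_def INFM_iff_infinite .
    moreover have "{i. b i = x} \<subseteq> {i. Dec X \<in> qN Q (a i)}"
      using x(2) pb unfolding is_Dec_action_def by auto
    ultimately show ?thesis using infinite_super by blast
  qed
  define f where "f i = snd (s i) X" for i
  have fpos: "f i \<ge> 0" for i using valid[of i] by (simp add: valid_state_def f_def)
  have mono1: "f (Suc i) \<le> f i" if "i \<ge> N" for i
    using suc[of i] N[OF that] by (force simp: q_succ_def f_def)
  have mono2: "f j \<le> f i" if "N \<le> i" "i \<le> j" for i j
    using that(2)
  proof (induction j rule: dec_induct)
    case (step n) then show ?case using mono1[of n] that(1) by simp
  qed simp
  have decpos: "f i > 0" if "Dec X \<in> qN Q (a i)" for i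
  proof -
    have "Gt0 X \<in> qPre Q (a i)" using wf inO that unfolding wf_qnp_def by blast
    then show ?thesis using hold by (force simp: f_def)
  qed
  have drop: "f (Suc j) \<le> f j - \<epsilon>" if "j \<ge> N" "Dec X \<in> qN Q (a j)" for j
  proof -
    have lt: "f (Suc j) < f j" using suc[of j] that(2) by (simp add: q_succ_def f_def)
    obtain j' where j': "j' \<ge> Suc j" "Dec X \<in> qN Q (a j')"
      using infdec unfolding infinite_nat_iff_unbounded_le by blast
    have "f j' \<le> f (Suc j)" using mono2[of "Suc j" j'] j'(1) that(1) by simp
    with decpos[OF j'(2)] have "f (Suc j) \<noteq> 0" by auto
    moreover have "\<epsilon> \<le> \<bar>f (Suc j) - f j\<bar> \<or> 0 = f (Suc j)"
      using eps(2)[rule_format, where X=X and i=j] lt unfolding f_def by auto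
    ultimately show ?thesis using lt by auto
  qed
  have unb: "\<exists>k\<ge>N. f k \<le> f N - \<epsilon> * real m" for m
  proof (induction m)
    case 0 then show ?case by auto
  next
    case (Suc m)
    then obtain k where k: "k \<ge> N" "f k \<le> f N - \<epsilon> * real m" by blast
    obtain j where j: "j \<ge> k" "Dec X \<in> qN Q (a j)"
      using infdec unfolding infinite_nat_iff_unbounded_le by blast
    have "f (Suc j) \<le> f j - \<epsilon>" using drop j k by simp
    moreover have "f j \<le> f k" using mono2 j k by simp
    ultimately show ?case using k j by (intro exI[of _ "Suc j"]) (auto simp: algebra_simps)
  qed
  obtain m where "f N < real m * \<epsilon>" using reals_Archimedean3[OF eps(1)] by blast
  with unb[of m] fpos show False by (smt (verit) mult.commute)
qed


lemma nat_diff_ge1: "(x::nat) \<noteq> y \<Longrightarrow> 1 \<le> \<bar>real x - real y\<bar>"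
  by (cases "x < y") auto

lemma p_to_q:
  fixes Q :: "('f::finite, 'v::finite, 'a) qnp"
  assumes wf: "wf_qnp Q" and tr: "fond_inf_traj (T_D Q) \<pi> b" and nt: "\<not> terminating_traj Q \<pi> b"
  shows "\<exists>s a. q_inf_traj Q \<pi> s a"
proof -
  define act where "act i = the (\<pi> (b i))" for i
  have all3: "\<pi> (b i) = Some (act i) \<and> fond_applicable (T_D Q) (act i) (b i)
    \<and> fond_succ (T_D Q) (act i) (b i) (b (Suc i))" for i
  proof -
    obtain a where "\<pi> (b i) = Some a \<and> fond_applicable (T_D Q) a (b i) \<and> fond_succ (T_D Q) a (b i) (b (Suc i))"
      using tr unfolding fond_inf_traj_def by blast
    then show ?thesis unfolding act_def by simp
  qed
  have piA: "\<pi> (b i) = Some (act i)" and appl: "fond_applicable (T_D Q) (act i) (b i)"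
    and succ: "fond_succ (T_D Q) (act i) (b i) (b (Suc i))" for i
    using all3 by auto
  have inO: "act i \<in> qO Q" for i using appl[of i] by (simp add: fond_applicable_def T_D_def)
  have pre: "b i (fst (tr_lit l)) = snd (tr_lit l)" if "l \<in> qPre Q (act i)" for l i
    using appl[of i] that by (force simp: fond_applicable_def T_D_def)
  have effI: "b (Suc i) (Inl p) = apply_peff (qEff Q (act i)) (\<lambda>p. b i (Inl p)) p" for i p
    using succ[of i] unfolding fond_succ_def
    by (drule_tac x="Inl p" in spec) (auto simp: T_D_def apply_peff_def split: if_splits)
  have effInc: "\<not> b (Suc i) (Inr X)" if "Inc X \<in> qN Q (act i)" for i X
    using succ[of i] that unfolding fond_succ_def
    by (drule_tac x="Inr X" in spec) (auto simp: T_D_def)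
  have effNone: "b (Suc i) (Inr X) = b i (Inr X)" if "Inc X \<notin> qN Q (act i)" "Dec X \<notin> qN Q (act i)" for i X
    using succ[of i] that unfolding fond_succ_def
    by (drule_tac x="Inr X" in spec) (auto simp: T_D_def)
  have notboth: "\<not> (Inc X \<in> qN Q (act i) \<and> Dec X \<in> qN Q (act i))" for X i
    using wf inO unfolding wf_qnp_def by blast
  have decpre: "\<not> b i (Inr X)" if "Dec X \<in> qN Q (act i)" for i X
  proof -
    have "Gt0 X \<in> qPre Q (act i)" using wf inO that unfolding wf_qnp_def by blast
    from pre[OF this] show ?thesis by simp
  qed
  have incinf: "infinite {i. Inc X \<in> qN Q (act i)}" if "infinite {i. Dec X \<in> qN Q (act i)}" for X
  proof -
    have "infinite {i. is_Dec_action Q X (\<pi> (b i))}"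
      using that by (simp add: is_Dec_action_def piA)
    then obtain x where x: "is_Dec_action Q X (\<pi> x)" "occurs_inf b x"
      using pig[of "\<lambda>y. is_Dec_action Q X (\<pi> y)" b] by blast
    then obtain x' where x': "occurs_inf b x'" "is_Inc_action Q X (\<pi> x')"
      using nt unfolding terminating_traj_def by blast
    have "infinite {i. b i = x'}" using x'(1) unfolding occurs_inf_def INFM_iff_infinite .
    moreover have "{i. b i = x'} \<subseteq> {i. Inc X \<in> qN Q (act i)}"
      using x'(2) piA unfolding is_Inc_action_def by auto
    ultimately show ?thesis using infinite_super by blast
  qed
  define D where "D X i = {j. i \<le> j \<and> Dec X \<in> qN Q (act j) \<and> \<not> b (Suc j) (Inr X) \<and>
      (\<forall>k. i \<le> k \<and> k \<le> j \<longrightarrow> Inc X \<notin> qN Q (act k))}" for X i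
  have finD: "finite (D X i)" for X i
  proof (rule ccontr)
    assume inf: "infinite (D X i)"
    hence "infinite {j. Dec X \<in> qN Q (act j)}"
      by (rule infinite_super[rotated]) (auto simp: D_def)
    hence "infinite {j. Inc X \<in> qN Q (act j)}" by (rule incinf)
    then obtain m where m: "m \<ge> i" "Inc X \<in> qN Q (act m)"
      unfolding infinite_nat_iff_unbounded_le by blast
    have "D X i \<subseteq> {..<m}"
    proof
      fix j assume "j \<in> D X i"
      then show "j \<in> {..<m}" using m unfolding D_def by (auto simp: not_less)
    qed
    then show False using inf finite_subset by blast
  qed
  define E where "E X i = card {k. k < i \<and> Inc X \<in> qN Q (act k)}" for X i
  have Esuc: "E X (Suc i) = E X i + (if Inc X \<in> qN Q (act i) then 1 else 0)" for X i
  proof -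
    have "{k. k < Suc i \<and> Inc X \<in> qN Q (act k)} = (if Inc X \<in> qN Q (act i)
       then insert i {k. k < i \<and> Inc X \<in> qN Q (act k)} else {k. k < i \<and> Inc X \<in> qN Q (act k)})"
      by (auto simp: less_Suc_eq)
    then show ?thesis by (simp add: E_def)
  qed
  define v where "v X i = (if b i (Inr X) then 0 else 1 + card (D X i) + E X i)" for X i
  have vz: "v X i = 0 \<longleftrightarrow> b i (Inr X)" for X i by (simp add: v_def)
  have vInc: "v X (Suc i) > v X i" if "Inc X \<in> qN Q (act i)" for X i
  proof -
    have "D X i = {}" using that unfolding D_def by auto
    then show ?thesis using effInc[OF that] Esuc[of X i] that by (simp add: v_def)
  qed
  have vDec: "v X (Suc i) < v X i" if "Dec X \<in> qN Q (act i)" for X i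
  proof (cases "b (Suc i) (Inr X)")
    case True then show ?thesis using decpre[OF that] by (simp add: v_def)
  next
    case False
    have ni: "Inc X \<notin> qN Q (act i)" using notboth that by blast
    have "D X i = insert i (D X (Suc i))"
    proof (intro set_eqI iffI)
      fix j assume "j \<in> D X i"
      then show "j \<in> insert i (D X (Suc i))" unfolding D_def by (auto simp: le_eq_less_or_eq Suc_le_eq)
    next
      fix j assume "j \<in> insert i (D X (Suc i))"
      then show "j \<in> D X i" using that False ni unfolding D_def
        by (auto; metis Suc_leI le_neq_implies_less)
    qed
    moreover have "i \<notin> D X (Suc i)" by (simp add: D_def)
    ultimately have "card (D X i) = Suc (card (D X (Suc i)))" using finD by simp
    then show ?thesis using False decpre[OF that] Esuc[of X i] ni by (simp add: v_def)
  qed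
  have vNone: "v X (Suc i) = v X i" if "Inc X \<notin> qN Q (act i)" "Dec X \<notin> qN Q (act i)" for X i
  proof -
    have "D X i = D X (Suc i)"
    proof (intro set_eqI iffI)
      fix j assume "j \<in> D X i"
      then show "j \<in> D X (Suc i)" using that unfolding D_def by (auto simp: le_eq_less_or_eq Suc_le_eq)
    next
      fix j assume "j \<in> D X (Suc i)"
      then show "j \<in> D X i" using that unfolding D_def
        by (auto; metis Suc_leI le_neq_implies_less)
    qed
    then show ?thesis using effNone[OF that] Esuc[of X i] that by (simp add: v_def)
  qed
  define s where "s i = ((\<lambda>p. b i (Inl p)), (\<lambda>X. real (v X i)))" for i
  have valid: "valid_state (s i)" for i by (simp add: valid_state_def s_def)
  have bars: "bar (s i) = b i" for i
  proof
    fix x show "bar (s i) x = b i x" by (cases x) (auto simp: bar_def s_def vz)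
  qed
  have "q_inf_traj Q \<pi> s act"
    unfolding q_inf_traj_def
  proof (intro conjI allI)
    show "q_init Q (s 0)"
    proof -
      have i0: "b 0 x = ((x, True) \<in> tr_lit ` qI Q)" for x
        using tr unfolding fond_inf_traj_def fond_init_def by (simp add: T_D_def)
      have "b 0 (Inl p) = (Atom p \<in> qI Q)" for p using i0[of "Inl p"] by (simp add: tr_lit_True_Inl)
      moreover have "b 0 (Inr X) = (Eq0 X \<in> qI Q)" for X using i0[of "Inr X"] by (simp add: tr_lit_True_Inr)
      ultimately show ?thesis using valid[of 0] unfolding q_init_def
        by (simp add: s_def flip: vz)
    qed
  next
    fix i show "\<pi> (bar (s i)) = Some (act i)" using piA by (simp add: bars)
  next
    fix i show "q_applicable Q (act i) (s i)"
      unfolding q_applicable_def sat_def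
    proof (intro conjI ballI)
      show "act i \<in> qO Q" by (rule inO)
    next
      fix l assume "l \<in> qPre Q (act i)"
      from pre[OF this] show "holds (s i) l" by (cases l) (auto simp: s_def vz gr0_conv_Suc v_def)
    qed
  next
    fix i show "q_succ Q (act i) (s i) (s (Suc i))"
      unfolding q_succ_def
      using valid effI vInc vDec vNone by (auto simp: s_def valid_state_def)
  next
    show "\<exists>\<epsilon>::real. \<epsilon> > 0 \<and> (\<forall>X i. snd (s (Suc i)) X \<noteq> snd (s i) X \<longrightarrow>
         \<bar>snd (s (Suc i)) X - snd (s i) X\<bar> \<ge> \<epsilon> \<or>
         (0 = snd (s (Suc i)) X \<and> snd (s (Suc i)) X < snd (s i) X \<and> snd (s i) X < \<epsilon>))"
      by (rule exI[of _ 1]) (auto simp: s_def nat_diff_ge1)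
  qed
  then show ?thesis by blast
qed

theorem theorem4:
  fixes Q :: "('f::finite, 'v::finite, 'a) qnp"
    and \<pi> :: "('f, 'v, 'a) policy"
  assumes "wf_qnp Q"
  shows "Q_terminating Q \<pi> \<longleftrightarrow> P_terminating Q \<pi>"
  using q_to_p[OF assms] p_to_q[OF assms]
  unfolding Q_terminating_def P_terminating_def by blast

end
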